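(* Suppose $f$ is twice differentiable at every point of $\mathbb{R}^{n\times p}$, and let $X\in\mathcal{S}_{n,p}$ satisfy $\nabla h(X)=0$. Then for every $D_1\in\mathcal{T}_X$ and $D_2\in\mathcal{N}_X$, $$\langle D_2,\nabla^2h(X)[D_2]\rangle\ge(2\beta-M_2)\|D_2\|_F^2,\qquad \langle D_1,\nabla^2h(X)[D_2]\rangle=0 .$$
   Context: $f:\mathbb{R}^{n\times p}\to\mathbb{R}$ is differentiable with $f,\nabla f$ locally Lipschitz. $\langle A,B\rangle=\mathrm{tr}(A^\top B)$, $\Phi(M):=\frac12(M+M^\top)$. $\mathcal{S}_{n,p}=\{X:X^\top X=I_p\}$; for $X\in\mathcal{S}_{n,p}$, $\mathcal{T}_X:=\{D:\Phi(D^\top X)=0\}$ and $\mathcal{N}_X:=\{X\Lambda:\Lambda\in\mathbb{R}^{p\times p},\ \Lambda=\Lambda^\top\}$. $\mathcal{A}(X):=\frac32I_p-\frac12X^\top X$, $g(X):=f(X\mathcal{A}(X))$, $h(X):=g(X)+\frac\beta4\|X^\top X-I_p\|_F^2$ with $\beta>0$. $\Omega:=\{X:\|X\|_2\le1+\frac1{12}\}$ and $M_2:=\sup_{X\ne Y\in\Omega}\frac{\|\nabla g(X)-\nabla g(Y)\|_F}{\|X-Y\|_F}$. *)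

theory Defs
  imports "HOL-Analysis.Analysis"
begin

text \<open>Matrices in R^(n x p) are modelled as real^'p^'n. The Frobenius inner product
  tr(A^T B) is the Euclidean inner product (\<bullet>) on this type, and the Frobenius norm is norm.\<close>

definition grad :: "(real^'p^'n \<Rightarrow> real) \<Rightarrow> real^'p^'n \<Rightarrow> real^'p^'n" where
  "grad F X = (SOME G. (F has_derivative (\<lambda>D. G \<bullet> D)) (at X))"

definition hess :: "(real^'p^'n \<Rightarrow> real) \<Rightarrow> real^'p^'n \<Rightarrow> real^'p^'n \<Rightarrow> real^'p^'n" where
  "hess F X D = frechet_derivative (grad F) (at X) D"

definition symPart :: "real^'p^'p \<Rightarrow> real^'p^'p" where
  "symPart M = (1/2) *\<^sub>R (M + transpose M)"

definition Stiefel :: "(real^'p^'n) set" where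
  "Stiefel = {X. transpose X ** X = mat 1}"

definition tangentSp :: "real^'p^'n \<Rightarrow> (real^'p^'n) set" where
  "tangentSp X = {D. symPart (transpose D ** X) = 0}"

definition normalSp :: "real^'p^'n \<Rightarrow> (real^'p^'n) set" where
  "normalSp X = {X ** L | L. transpose L = L}"

definition Acal :: "real^'p^'n \<Rightarrow> real^'p^'p" where
  "Acal X = (3/2) *\<^sub>R mat 1 - (1/2) *\<^sub>R (transpose X ** X)"

definition gfun :: "(real^'p^'n \<Rightarrow> real) \<Rightarrow> real^'p^'n \<Rightarrow> real" where
  "gfun f X = f (X ** Acal X)"

definition hfun :: "(real^'p^'n \<Rightarrow> real) \<Rightarrow> real \<Rightarrow> real^'p^'n \<Rightarrow> real" where
  "hfun f \<beta> X = gfun f X + \<beta> / 4 * (norm (transpose X ** X - mat 1))^2"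

definition spec_norm :: "real^'p^'n \<Rightarrow> real" where
  "spec_norm X = onorm (\<lambda>v. X *v v)"

definition OmegaSet :: "(real^'p^'n) set" where
  "OmegaSet = {X. spec_norm X \<le> 1 + 1/12}"

definition M2 :: "(real^'p^'n \<Rightarrow> real) \<Rightarrow> real" where
  "M2 f = (SUP XY \<in> {(X, Y). X \<in> OmegaSet \<and> Y \<in> OmegaSet \<and> X \<noteq> Y}.
            norm (grad (gfun f) (fst XY) - grad (gfun f) (snd XY)) / norm (fst XY - snd XY))"

definition locally_lipschitz :: "('a::metric_space \<Rightarrow> 'b::metric_space) \<Rightarrow> bool" where
  "locally_lipschitz F = (\<forall>x. \<exists>e>0. \<exists>L. L-lipschitz_on (cball x e) F)"

end

theory Submission
  imports Defs
begin

lemma inner_mat: "(A::real^'n^'m) \<bullet> B = (\<Sum>i\<in>UNIV. \<Sum>j\<in>UNIV. A$i$j * B$i$j)"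
  by (simp add: inner_vec_def)
lemma inner_mm1: "((A::real^'n^'m) ** B) \<bullet> (C::real^'p^'m) = B \<bullet> (transpose A ** C)"
proof -
  have "((A::real^'n^'m) ** B) \<bullet> (C::real^'p^'m) = (\<Sum>i\<in>UNIV. \<Sum>j\<in>UNIV. \<Sum>k\<in>UNIV. A$i$k * B$k$j * C$i$j)"
    by (simp add: inner_mat matrix_matrix_mult_def sum_distrib_right)
  also have "\<dots> = (\<Sum>i\<in>UNIV. \<Sum>k\<in>UNIV. \<Sum>j\<in>UNIV. A$i$k * B$k$j * C$i$j)"
    by (rule sum.cong[OF refl], rule sum.swap)
  also have "\<dots> = (\<Sum>k\<in>UNIV. \<Sum>i\<in>UNIV. \<Sum>j\<in>UNIV. A$i$k * B$k$j * C$i$j)"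
    by (rule sum.swap)
  also have "\<dots> = (\<Sum>k\<in>UNIV. \<Sum>j\<in>UNIV. \<Sum>i\<in>UNIV. A$i$k * B$k$j * C$i$j)"
    by (rule sum.cong[OF refl], rule sum.swap)
  also have "\<dots> = B \<bullet> (transpose A ** C)"
    by (simp add: inner_mat matrix_matrix_mult_def transpose_def sum_distrib_left mult_ac)
  finally show ?thesis .
qed
lemma inner_tr: "transpose (A::real^'n^'m) \<bullet> B = A \<bullet> transpose B"
  apply (simp add: inner_mat transpose_def)
  by (subst sum.swap) (simp add: mult.commute)
lemma inner_mm2: "((A::real^'n^'m) ** B) \<bullet> (C::real^'p^'m) = A \<bullet> (C ** transpose B)"
proof -
  have "(A ** B) \<bullet> C = transpose (A ** B) \<bullet> transpose C" by (simp add: inner_tr)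
  also have "\<dots> = (transpose B ** transpose A) \<bullet> transpose C" by (simp add: matrix_transpose_mul)
  also have "\<dots> = transpose A \<bullet> (B ** transpose C)" by (simp add: inner_mm1)
  also have "\<dots> = A \<bullet> (C ** transpose B)" by (simp add: inner_tr matrix_transpose_mul)
  finally show ?thesis .
qed

lemma mm_radd: "((A::real^'n^'m) + B) ** C = A ** C + B ** C"
  by (vector matrix_matrix_mult_def sum.distrib[symmetric] field_simps)
lemma mm_rdiff: "((A::real^'n^'m) - B) ** C = A ** C - B ** C"
  by (vector matrix_matrix_mult_def sum_subtractf[symmetric] field_simps)
lemma mm_ldiff: "(A::real^'n^'m) ** (B - C) = A ** B - A ** C"
  by (vector matrix_matrix_mult_def sum_subtractf[symmetric] field_simps)
lemma mm_lscale: "(k *\<^sub>R (A::real^'n^'m)) ** B = k *\<^sub>R (A ** B)"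
  by (simp add: scalar_matrix_assoc)
lemma mm_rscale: "(A::real^'n^'m) ** (k *\<^sub>R B) = k *\<^sub>R (A ** B)"
  by (simp add: matrix_scalar_ac scalar_matrix_assoc)
lemma tr_add: "transpose ((A::real^'n^'m) + B) = transpose A + transpose B"
  by (simp add: transpose_def vec_eq_iff)
lemma tr_diff: "transpose ((A::real^'n^'m) - B) = transpose A - transpose B"
  by (simp add: transpose_def vec_eq_iff)

lemma bb_mm: "bounded_bilinear ((**) :: real^'n^'m \<Rightarrow> real^'p^'n \<Rightarrow> real^'p^'m)"
proof -
  have "bilinear ((**) :: real^'n^'m \<Rightarrow> real^'p^'n \<Rightarrow> real^'p^'m)"
    unfolding bilinear_def
    by (auto intro!: linearI simp: matrix_add_ldistrib mm_radd mm_lscale mm_rscale)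
  then show ?thesis by (simp add: bilinear_conv_bounded_bilinear)
qed
lemma bl_tr: "bounded_linear (transpose :: real^'n^'m \<Rightarrow> real^'m^'n)"
proof -
  have "linear (transpose :: real^'n^'m \<Rightarrow> real^'m^'n)"
    by (auto intro!: linearI simp: tr_add transpose_scalar)
  then show ?thesis by (simp add: linear_conv_bounded_linear)
qed
lemma has_derivative_mm[derivative_intros]:
  fixes f :: "'a::real_normed_vector \<Rightarrow> real^'n^'m" and g :: "'a \<Rightarrow> real^'p^'n"
  assumes "(f has_derivative f') (at x within s)" "(g has_derivative g') (at x within s)"
  shows "((\<lambda>y. f y ** g y) has_derivative (\<lambda>h. f x ** g' h + f' h ** g x)) (at x within s)"
  using bounded_bilinear.FDERIV[OF bb_mm assms] .
lemma has_derivative_tr[derivative_intros]: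
  fixes f :: "'a::real_normed_vector \<Rightarrow> real^'n^'m"
  assumes "(f has_derivative f') F"
  shows "((\<lambda>y. transpose (f y)) has_derivative (\<lambda>h. transpose (f' h))) F"
  using bounded_linear.has_derivative[OF bl_tr assms] .

lemma grad_works:
  fixes F :: "real^'p^'n \<Rightarrow> real"
  assumes "F differentiable (at Y)"
  shows "(F has_derivative (\<lambda>D. grad F Y \<bullet> D)) (at Y)"
proof -
  obtain L where L: "(F has_derivative L) (at Y)" using assms by (auto simp: differentiable_def)
  have lin: "linear L" using L has_derivative_linear by blast
  have "\<And>D. L D = D \<bullet> adjoint L 1"
    using adjoint_works[OF lin, of _ 1] by simp
  then have "L = (\<lambda>D. adjoint L 1 \<bullet> D)" by (simp add: fun_eq_iff inner_commute)
  then have "(F has_derivative (\<lambda>D. adjoint L 1 \<bullet> D)) (at Y)"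
    using L by simp
  then have "\<exists>G. (F has_derivative (\<lambda>D. G \<bullet> D)) (at Y)" by blast
  then show ?thesis unfolding grad_def by (rule someI_ex)
qed
lemma grad_eq:
  fixes F :: "real^'p^'n \<Rightarrow> real"
  assumes "(F has_derivative (\<lambda>D. V \<bullet> D)) (at Y)"
  shows "grad F Y = V"
proof -
  have "(F has_derivative (\<lambda>D. grad F Y \<bullet> D)) (at Y)"
    using assms grad_works differentiableI by blast
  then have "(\<lambda>D. grad F Y \<bullet> D) = (\<lambda>D. V \<bullet> D)"
    using has_derivative_unique assms by blast
  then have "grad F Y \<bullet> (grad F Y - V) = V \<bullet> (grad F Y - V)" by metis
  then have "(grad F Y - V) \<bullet> (grad F Y - V) = 0" by (simp add: inner_diff_left)
  then show ?thesis by simp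
qed

definition Pm :: "real^'p^'n \<Rightarrow> real^'p^'n \<Rightarrow> real^'p^'n" where
  "Pm Y G = G ** Acal Y - (1/2) *\<^sub>R (Y ** (transpose G ** Y) + Y ** (transpose Y ** G))"
definition DQ :: "real^'p^'n \<Rightarrow> real^'p^'n \<Rightarrow> real^'p^'n" where
  "DQ Y D = D ** Acal Y - (1/2) *\<^sub>R (Y ** (transpose D ** Y + transpose Y ** D))"

lemma mm_lneg: "(A::real^'n^'m) ** (- B) = - (A ** B)"
  using mm_rscale[of A "-1" B] by simp
lemma mm_rneg: "(- (A::real^'n^'m)) ** B = - (A ** B)"
  using mm_lscale[of "-1" A B] by simp
lemma tr_Acal: "transpose (Acal Y) = Acal Y"
  by (simp add: Acal_def tr_diff transpose_scalar matrix_transpose_mul)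

lemma Q_deriv: "((\<lambda>Y. Y ** Acal Y) has_derivative DQ Y) (at Y)"
  unfolding Acal_def
  apply (rule has_derivative_eq_rhs)
   apply (rule derivative_intros has_derivative_ident has_derivative_const)+
  apply (simp add: fun_eq_iff DQ_def Acal_def mm_ldiff mm_rscale mm_lneg matrix_add_ldistrib algebra_simps)
  done

lemma DQ_adj: fixes Y G D :: "real^'p^'n" shows "G \<bullet> DQ Y D = Pm Y G \<bullet> D"
proof -
  have 1: "G \<bullet> (D ** Acal Y) = (G ** Acal Y) \<bullet> D"
    using inner_mm2[of D "Acal Y" G] by (simp add: tr_Acal inner_commute)
  have 2: "G \<bullet> (Y ** M) = (transpose Y ** G) \<bullet> M" for M :: "real^'p^'p"
    using inner_mm1[of Y M G] by (simp add: inner_commute)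
  have 3: "N \<bullet> (transpose D ** Y) = (Y ** transpose N) \<bullet> D" for N :: "real^'p^'p"
    using inner_mm2[of "transpose D" Y N] inner_tr[of D "N ** transpose Y"]
    by (simp add: inner_commute matrix_transpose_mul)
  have 4: "N \<bullet> (transpose Y ** D) = (Y ** N) \<bullet> D" for N :: "real^'p^'p"
    using inner_mm1[of "transpose Y" D N] by (simp add: inner_commute)
  show ?thesis
    unfolding DQ_def Pm_def
    by (simp add: inner_diff_right inner_diff_left inner_add_right inner_add_left 1 2 3 4
        matrix_transpose_mul)
qed

lemma g_deriv:
  fixes f :: "real^'p^'n \<Rightarrow> real"
  assumes fd: "\<forall>Y. f differentiable (at Y)"
  shows "(gfun f has_derivative (\<lambda>D. Pm Y (grad f (Y ** Acal Y)) \<bullet> D)) (at Y)"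
proof -
  have "((\<lambda>Y. f (Y ** Acal Y)) has_derivative (\<lambda>D. grad f (Y ** Acal Y) \<bullet> DQ Y D)) (at Y)"
    using has_derivative_compose[OF Q_deriv grad_works[OF fd[rule_format]]] by (simp add: o_def)
  then show ?thesis unfolding gfun_def DQ_adj .
qed
lemma grad_g:
  fixes f :: "real^'p^'n \<Rightarrow> real"
  assumes fd: "\<forall>Y. f differentiable (at Y)"
  shows "grad (gfun f) Y = Pm Y (grad f (Y ** Acal Y))"
  using grad_eq[OF g_deriv[OF fd]] .

lemma pen_deriv:
  fixes Y :: "real^'p^'n"
  shows "((\<lambda>Y. \<beta> / 4 * (norm (transpose Y ** Y - mat 1))^2) has_derivative
     (\<lambda>D. (\<beta> *\<^sub>R (Y ** (transpose Y ** Y - mat 1))) \<bullet> D)) (at Y)"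
proof -
  define E where "E = transpose Y ** Y - mat 1"
  have trE: "transpose E = E" by (simp add: E_def tr_diff matrix_transpose_mul)
  have a: "E \<bullet> (transpose D ** Y) = (Y ** E) \<bullet> D" for D :: "real^'p^'n"
    using inner_mm2[of "transpose D" Y E] inner_tr[of D "E ** transpose Y"]
    by (simp add: inner_commute matrix_transpose_mul trE)
  have b: "E \<bullet> (transpose Y ** D) = (Y ** E) \<bullet> D" for D :: "real^'p^'n"
    using inner_mm1[of "transpose Y" D E] by (simp add: inner_commute)
  have "((\<lambda>Y. \<beta> / 4 * ((transpose Y ** Y - mat 1) \<bullet> (transpose Y ** Y - mat 1))) has_derivative
     (\<lambda>D. (\<beta> *\<^sub>R (Y ** (transpose Y ** Y - mat 1))) \<bullet> D)) (at Y)"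
    apply (rule has_derivative_eq_rhs)
     apply (rule derivative_intros has_derivative_ident has_derivative_const)+
    apply (simp add: fun_eq_iff E_def[symmetric] inner_add_right inner_add_left a b inner_commute[of _ E])
    done
  then show ?thesis by (simp add: power2_norm_eq_inner)
qed

lemma grad_h:
  fixes f :: "real^'p^'n \<Rightarrow> real"
  assumes fd: "\<forall>Y. f differentiable (at Y)"
  shows "grad (hfun f \<beta>) Y = Pm Y (grad f (Y ** Acal Y)) + \<beta> *\<^sub>R (Y ** (transpose Y ** Y - mat 1))"
proof -
  have "(hfun f \<beta> has_derivative (\<lambda>D. (Pm Y (grad f (Y ** Acal Y)) + \<beta> *\<^sub>R (Y ** (transpose Y ** Y - mat 1))) \<bullet> D)) (at Y)"
    unfolding hfun_def[abs_def]
    using has_derivative_add[OF g_deriv[OF fd] pen_deriv[of \<beta> Y]]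
    by (simp add: inner_add_left)
  then show ?thesis by (rule grad_eq)
qed

lemma Pm_deriv:
  fixes W :: "real^'p^'n \<Rightarrow> real^'p^'n"
  assumes "(W has_derivative W') (at X)"
  shows "((\<lambda>Y. Pm Y (W Y)) has_derivative (\<lambda>D. W' D ** Acal X
      - W X ** ((1/2) *\<^sub>R (transpose D ** X + transpose X ** D))
      - (1/2) *\<^sub>R (D ** (transpose (W X) ** X) + X ** (transpose (W' D) ** X + transpose (W X) ** D)
         + D ** (transpose X ** W X) + X ** (transpose D ** W X + transpose X ** W' D)))) (at X)"
  unfolding Pm_def Acal_def
  apply (rule has_derivative_eq_rhs)
   apply (rule derivative_intros has_derivative_ident has_derivative_const assms)+
  apply (simp add: fun_eq_iff mm_ldiff mm_rscale mm_lneg matrix_add_ldistrib mm_radd algebra_simps)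
  done
lemma pg_deriv:
  fixes X :: "real^'p^'n"
  shows "((\<lambda>Y. \<beta> *\<^sub>R (Y ** (transpose Y ** Y - mat 1))) has_derivative (\<lambda>D. \<beta> *\<^sub>R
     (D ** (transpose X ** X - mat 1) + X ** (transpose D ** X + transpose X ** D)))) (at X)"
  apply (rule has_derivative_eq_rhs)
   apply (rule derivative_intros has_derivative_ident has_derivative_const)+
  apply (simp add: fun_eq_iff mm_ldiff mm_rscale mm_lneg matrix_add_ldistrib mm_radd algebra_simps)
  done


definition lb :: "'a::metric_space set \<Rightarrow> ('a \<Rightarrow> 'b::real_normed_vector) \<Rightarrow> bool" where
  "lb S F \<longleftrightarrow> (\<exists>C. C-lipschitz_on S F) \<and> bounded (F ` S)"

lemma lb_const: "lb S (\<lambda>_. c)"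
  unfolding lb_def
  by (auto intro: lipschitz_on_constant bounded_subset[of "{c}"] finite_imp_bounded)

lemma lb_id: "bounded S \<Longrightarrow> lb S (\<lambda>x. x)"
  unfolding lb_def by (auto intro: lipschitz_on_id)

lemma lb_add: "lb S F \<Longrightarrow> lb S G \<Longrightarrow> lb S (\<lambda>x. F x + G x)"
  unfolding lb_def
  by (auto intro: lipschitz_on_add bounded_plus_comp)

lemma lb_bl:
  assumes T: "bounded_linear T" and F: "lb S F"
  shows "lb S (\<lambda>x. T (F x))"
proof -
  obtain C where C: "C-lipschitz_on S F" and b: "bounded (F ` S)" using F unfolding lb_def by blast
  obtain K where K: "K-lipschitz_on (F ` S) T"
    using bounded_linear.lipschitz_boundE[OF T] by blast
  have "(K * C)-lipschitz_on S (\<lambda>x. T (F x))" by (rule lipschitz_on_compose2[OF C K])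
  moreover have "bounded ((\<lambda>x. T (F x)) ` S)"
    using bounded_linear_image[OF b T] by (simp add: image_image)
  ultimately show ?thesis unfolding lb_def by blast
qed

lemma lb_diff: "lb S F \<Longrightarrow> lb S G \<Longrightarrow> lb S (\<lambda>x. F x - G x)"
  using lb_add[of S F "\<lambda>x. - G x"] lb_bl[OF bounded_linear_minus[OF bounded_linear_ident], of S G]
  by simp

lemma lb_bb:
  assumes B: "bounded_bilinear B" and F: "lb S F" and G: "lb S G"
  shows "lb S (\<lambda>x. B (F x) (G x))"
proof -
  obtain CF where CF: "CF-lipschitz_on S F" and bF: "bounded (F ` S)" using F unfolding lb_def by blast
  obtain CG where CG: "CG-lipschitz_on S G" and bG: "bounded (G ` S)" using G unfolding lb_def by blast
  obtain MF where MF: "\<forall>x\<in>S. norm (F x) \<le> MF" and MF0: "MF > 0" using bF unfolding bounded_pos by auto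
  obtain MG where MG: "\<forall>x\<in>S. norm (G x) \<le> MG" and MG0: "MG > 0" using bG unfolding bounded_pos by auto
  obtain K where K: "K > 0" "\<And>a b. norm (B a b) \<le> norm a * norm b * K"
    using bounded_bilinear.pos_bounded[OF B] by blast
  have "MF \<ge> 0" "MG \<ge> 0" using MF0 MG0 by auto
  have CF0: "CF \<ge> 0" and CG0: "CG \<ge> 0" using CF CG lipschitz_on_nonneg by blast+
  have "(K * (CF * MG + MF * CG))-lipschitz_on S (\<lambda>x. B (F x) (G x))"
  proof (rule lipschitz_onI)
      show "0 \<le> K * (CF * MG + MF * CG)" using K CF0 CG0 \<open>MF \<ge> 0\<close> \<open>MG \<ge> 0\<close> by simp
      fix x y assume xy: "x \<in> S" "y \<in> S"
      have e: "B (F x) (G x) - B (F y) (G y) = B (F x - F y) (G x) + B (F y) (G x - G y)"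
        by (simp add: bounded_bilinear.diff_left[OF B] bounded_bilinear.diff_right[OF B])
      have n1: "norm (B (F x - F y) (G x)) \<le> CF * dist x y * MG * K"
      proof -
        have "norm (B (F x - F y) (G x)) \<le> norm (F x - F y) * norm (G x) * K" by (rule K(2))
        also have "\<dots> \<le> (CF * dist x y) * MG * K"
          using lipschitz_onD[OF CF xy] MG xy K(1) \<open>MG \<ge> 0\<close> CF0
          by (intro mult_right_mono mult_mono) (auto simp: dist_norm)
        finally show ?thesis .
      qed
      have n2: "norm (B (F y) (G x - G y)) \<le> MF * (CG * dist x y) * K"
      proof -
        have "norm (B (F y) (G x - G y)) \<le> norm (F y) * norm (G x - G y) * K" by (rule K(2))
        also have "\<dots> \<le> MF * (CG * dist x y) * K"
          using lipschitz_onD[OF CG xy] MF xy K(1) \<open>MF \<ge> 0\<close>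
          by (intro mult_right_mono mult_mono) (auto simp: dist_norm)
        finally show ?thesis .
      qed
      have "dist (B (F x) (G x)) (B (F y) (G y)) \<le> norm (B (F x - F y) (G x)) + norm (B (F y) (G x - G y))"
        unfolding dist_norm e by (rule norm_triangle_ineq)
      also have "\<dots> \<le> K * (CF * MG + MF * CG) * dist x y"
        using n1 n2 by (simp add: algebra_simps)
      finally show "dist (B (F x) (G x)) (B (F y) (G y)) \<le> K * (CF * MG + MF * CG) * dist x y" .
  qed
  moreover have "bounded ((\<lambda>x. B (F x) (G x)) ` S)"
    unfolding bounded_iff
  proof (intro exI ballI)
    fix z assume "z \<in> (\<lambda>x. B (F x) (G x)) ` S"
    then obtain x where x: "x \<in> S" "z = B (F x) (G x)" by blast
    have "norm z \<le> norm (F x) * norm (G x) * K" using K(2) x by simp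
    also have "\<dots> \<le> MF * MG * K"
      using MF MG x K(1) MF0 MG0 by (intro mult_right_mono mult_mono) auto
    finally show "norm z \<le> MF * MG * K" .
  qed
  ultimately show ?thesis unfolding lb_def by blast
qed

lemma lb_comp:
  assumes F: "lb S F" and G: "\<And>T. bounded T \<Longrightarrow> \<exists>C. C-lipschitz_on T G"
  shows "lb S (\<lambda>x. G (F x))"
proof -
  obtain C where C: "C-lipschitz_on S F" and b: "bounded (F ` S)" using F unfolding lb_def by blast
  obtain K where K: "K-lipschitz_on (F ` S) G" using G[OF b] by blast
  have L: "(K * C)-lipschitz_on S (\<lambda>x. G (F x))" by (rule lipschitz_on_compose2[OF C K])
  have "bounded (G ` (F ` S))"
  proof (cases "S = {}")
    case True then show ?thesis by simp
  next
    case False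
    then obtain y0 where y0: "y0 \<in> F ` S" by blast
    obtain M where M: "\<forall>y\<in>F ` S. norm y \<le> M" using b unfolding bounded_iff by auto
    show ?thesis unfolding bounded_iff
    proof (intro exI ballI)
      fix z assume "z \<in> G ` F ` S"
      then obtain y where y: "y \<in> F ` S" "z = G y" by blast
      have "norm z \<le> norm (G y0) + dist (G y) (G y0)"
        using y norm_triangle_ineq2[of "G y" "G y0"] by (simp add: dist_norm)
      also have "\<dots> \<le> norm (G y0) + K * dist y y0" using lipschitz_onD[OF K y(1) y0] by simp
      also have "\<dots> \<le> norm (G y0) + K * (M + M)"
      proof -
        have "dist y y0 \<le> M + M" using M y y0 by (metis dist_norm norm_triangle_ineq4 add_mono order_trans)
        then show ?thesis using lipschitz_on_nonneg[OF K] by (simp add: mult_left_mono)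
      qed
      finally show "norm z \<le> norm (G y0) + K * (M + M)" .
    qed
  qed
  then show ?thesis using L unfolding lb_def by (auto simp: image_image)
qed


lemma spec_comp: "\<bar>(Y::real^'p^'n) $ i $ j\<bar> \<le> spec_norm Y"
  unfolding spec_norm_def using matrix_component_le_onorm[of Y i j] by (simp add: eta_contract_eq)

lemma norm_le_spec: "norm (Y::real^'p^'n) \<le> real CARD('n) * real CARD('p) * spec_norm Y"
proof -
  have r: "norm (Y $ i) \<le> real CARD('p) * spec_norm Y" for i
  proof -
    have "norm (Y $ i) \<le> (\<Sum>j\<in>UNIV. \<bar>Y $ i $ j\<bar>)" by (rule norm_le_l1_cart)
    also have "\<dots> \<le> (\<Sum>j\<in>(UNIV::'p set). spec_norm Y)" by (rule sum_mono) (rule spec_comp)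
    finally show ?thesis by simp
  qed
  have "norm Y = L2_set (\<lambda>i. norm (Y $ i)) UNIV" by (simp add: norm_vec_def)
  also have "\<dots> \<le> (\<Sum>i\<in>UNIV. norm (Y $ i))" by (rule L2_set_le_sum) simp
  also have "\<dots> \<le> (\<Sum>i\<in>(UNIV::'n set). real CARD('p) * spec_norm Y)" by (rule sum_mono) (rule r)
  finally show ?thesis by simp
qed

lemma Omega_bounded: "bounded (OmegaSet :: (real^'p^'n) set)"
  unfolding bounded_iff
proof (intro exI ballI)
  fix Y :: "real^'p^'n" assume "Y \<in> OmegaSet"
  then have "spec_norm Y \<le> 1 + 1/12" by (simp add: OmegaSet_def)
  then have "real CARD('n) * real CARD('p) * spec_norm Y \<le> real CARD('n) * real CARD('p) * (1 + 1/12)"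
    by (intro mult_left_mono) auto
  then show "norm Y \<le> real CARD('n) * real CARD('p) * (1 + 1/12)"
    using norm_le_spec[of Y] by linarith
qed

lemma bl_mv: "bounded_linear (\<lambda>v. (A::real^'p^'n) *v v)"
  by (simp add: linear_conv_bounded_linear)

lemma stiefel_iso:
  assumes "transpose X ** X = mat 1"
  shows "norm ((X::real^'p^'n) *v v) = norm v"
proof -
  have "(X *v v) \<bullet> (X *v v) = v \<bullet> v"
    using dot_lmul_matrix[of v "transpose X" "X *v v"]
    by (simp add: matrix_vector_mul_assoc assms)
  then show ?thesis by (metis norm_eq_sqrt_inner)
qed

lemma spec_stiefel_add:
  assumes "X \<in> Stiefel"
  shows "spec_norm ((X::real^'p^'n) + E) \<le> 1 + (\<Sum>i\<in>UNIV. \<Sum>j\<in>UNIV. \<bar>E $ i $ j\<bar>)"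
  unfolding spec_norm_def
proof (rule onorm_le)
  fix v :: "real^'p"
  have XX: "transpose X ** X = mat 1" using assms by (simp add: Stiefel_def)
  have "norm ((X + E) *v v) \<le> norm (X *v v) + norm (E *v v)"
    by (simp add: matrix_vector_mult_add_rdistrib norm_triangle_ineq)
  also have "norm (E *v v) \<le> onorm ((*v) E) * norm v"
    using onorm[OF bl_mv[of E]] by (simp add: eta_contract_eq)
  also have "\<dots> \<le> (\<Sum>i\<in>UNIV. \<Sum>j\<in>UNIV. \<bar>E $ i $ j\<bar>) * norm v"
    by (rule mult_right_mono[OF onorm_le_matrix_component_sum]) simp
  finally show "norm ((X + E) *v v) \<le> (1 + (\<Sum>i\<in>UNIV. \<Sum>j\<in>UNIV. \<bar>E $ i $ j\<bar>)) * norm v"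
    using stiefel_iso[OF XX, of v] by (simp add: algebra_simps)
qed


lemma lip_on_bounded:
  assumes "locally_lipschitz (G :: 'a::euclidean_space \<Rightarrow> 'b::real_normed_vector)" "bounded T"
  shows "\<exists>C. C-lipschitz_on T G"
proof -
  obtain r where r0: "T \<subseteq> ball 0 r" using bounded_subset_ballD[OF assms(2), of 0] by blast
  then have r: "T \<subseteq> cball 0 r" using ball_subset_cball by blast
  have ll: "local_lipschitz {0::real} (cball 0 r) (\<lambda>_. G)"
  proof (rule local_lipschitzI)
    fix t x assume "t \<in> {0::real}" "x \<in> cball (0::'a) r"
    obtain e L where e: "e > 0" and L: "L-lipschitz_on (cball x e) G"
      using assms(1) unfolding locally_lipschitz_def by blast
    have "L-lipschitz_on (cball x e \<inter> cball 0 r) G"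
      using L by (rule lipschitz_on_subset) blast
    then show "\<exists>u>0. \<exists>L. \<forall>t\<in>cball t u \<inter> {0::real}. L-lipschitz_on (cball x u \<inter> cball 0 r) G"
      using e by blast
  qed
  obtain L where "\<And>t. t \<in> {0::real} \<Longrightarrow> L-lipschitz_on (cball 0 r) G"
    by (rule local_lipschitz_compact_implies_lipschitz[OF ll compact_cball]) auto
  then have "L-lipschitz_on (cball 0 r) G" by blast
  then have "L-lipschitz_on T G" using r by (rule lipschitz_on_subset)
  then show ?thesis by blast
qed

lemma gg_lb:
  fixes f :: "real^'p^'n \<Rightarrow> real"
  assumes gradf_lip: "locally_lipschitz (grad f)" and S: "bounded S"
  shows "lb S (\<lambda>Y. Pm Y (grad f (Y ** Acal Y)))"
proof -
  note bb = bb_mm and tr = bl_tr and sc = bounded_linear_scaleR_right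
  have A: "lb S (\<lambda>Y. Acal Y)"
    unfolding Acal_def
    by (intro lb_diff lb_const lb_bl[OF sc] lb_bb[OF bb] lb_bl[OF tr] lb_id S)
  have Q: "lb S (\<lambda>Y. Y ** Acal Y)"
    by (intro lb_bb[OF bb] lb_id S A)
  have W: "lb S (\<lambda>Y. grad f (Y ** Acal Y))"
    by (rule lb_comp[OF Q lip_on_bounded[OF gradf_lip]])
  show ?thesis
    unfolding Pm_def
    by (intro lb_diff lb_add lb_bl[OF sc] lb_bb[OF bb] lb_bl[OF tr] lb_id S A W)
qed

lemma M2_bound:
  fixes f :: "real^'p^'n \<Rightarrow> real"
  assumes f_diff: "\<forall>Y. f differentiable (at Y)"
    and gradf_lip: "locally_lipschitz (grad f)"
    and X_st: "X \<in> Stiefel"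
    and Lg: "(grad (gfun f) has_derivative Lg) (at X)"
  shows "norm (Lg D) \<le> M2 f * norm D"
proof (cases "D = 0")
  case True
  then show ?thesis using linear_0[OF has_derivative_linear[OF Lg]] by simp
next
  case False
  define gg where "gg = grad (gfun f)"
  have gg_eq: "gg = (\<lambda>Y. Pm Y (grad f (Y ** Acal Y)))"
    using grad_g[OF f_diff] by (simp add: gg_def fun_eq_iff)
  obtain C where C: "C-lipschitz_on OmegaSet gg"
    using gg_lb[OF gradf_lip Omega_bounded] unfolding lb_def gg_eq by blast
  define P where "P = {(X, Y). X \<in> (OmegaSet :: (real^'p^'n) set) \<and> Y \<in> OmegaSet \<and> X \<noteq> Y}"
  define rat where "rat = (\<lambda>XY. norm (gg (fst XY) - gg (snd XY)) / norm (fst XY - snd XY))"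
  have M2: "M2 f = (SUP XY\<in>P. rat XY)" unfolding M2_def P_def rat_def gg_def by simp
  have bdd: "bdd_above (rat ` P)"
  proof (rule bdd_aboveI2)
    fix XY assume "XY \<in> P"
    then obtain Y Z where YZ: "XY = (Y, Z)" "Y \<in> OmegaSet" "Z \<in> OmegaSet" "Y \<noteq> Z" unfolding P_def by auto
    have "norm (gg Y - gg Z) \<le> C * norm (Y - Z)"
      using lipschitz_onD[OF C YZ(2,3)] by (simp add: dist_norm)
    then show "rat XY \<le> C" using YZ by (simp add: rat_def divide_le_eq)
  qed
  define s where "s = (\<Sum>i\<in>UNIV. \<Sum>j\<in>UNIV. \<bar>D $ i $ j\<bar>)"
  have s0: "s \<ge> 0" unfolding s_def by (simp add: sum_nonneg)
  define \<delta> where "\<delta> = 1 / (12 * (s + 1))"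
  have \<delta>0: "\<delta> > 0" using s0 by (simp add: \<delta>_def)
  have nD: "norm D > 0" using False by simp
  have key: "norm ((gg (X + h *\<^sub>R D) - gg X) /\<^sub>R h) \<le> M2 f * norm D" if h: "0 < h" "h < \<delta>" for h
  proof -
    have "h * s \<le> \<delta> * s" using h s0 by (intro mult_right_mono) auto
    also have "\<delta> * s \<le> 1/12" using s0 by (simp add: \<delta>_def field_simps)
    finally have hs: "h * s \<le> 1/12" .
    have "spec_norm (X + h *\<^sub>R D) \<le> 1 + (\<Sum>i\<in>UNIV. \<Sum>j\<in>UNIV. \<bar>(h *\<^sub>R D) $ i $ j\<bar>)"
      by (rule spec_stiefel_add[OF X_st])
    also have "(\<Sum>i\<in>UNIV. \<Sum>j\<in>UNIV. \<bar>(h *\<^sub>R D) $ i $ j\<bar>) = h * s"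
      using h by (simp add: s_def sum_distrib_left abs_mult)
    finally have "X + h *\<^sub>R D \<in> OmegaSet" using hs by (simp add: OmegaSet_def)
    moreover have "X \<in> OmegaSet"
      using spec_stiefel_add[OF X_st, of 0] by (simp add: OmegaSet_def)
    moreover have "X + h *\<^sub>R D \<noteq> X" using h False by simp
    ultimately have inP: "(X + h *\<^sub>R D, X) \<in> P" unfolding P_def by simp
    have "rat (X + h *\<^sub>R D, X) \<le> M2 f" unfolding M2 by (rule cSUP_upper[OF inP bdd])
    then have "norm (gg (X + h *\<^sub>R D) - gg X) / (h * norm D) \<le> M2 f"
      using h by (simp add: rat_def)
    then have "norm (gg (X + h *\<^sub>R D) - gg X) \<le> M2 f * (h * norm D)"
      using h nD by (simp add: divide_le_eq)
    moreover have "norm ((gg (X + h *\<^sub>R D) - gg X) /\<^sub>R h) = norm (gg (X + h *\<^sub>R D) - gg X) / h"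
      using h by (simp add: divide_inverse_commute)
    ultimately show ?thesis using h by (simp add: divide_le_eq mult_ac)
  qed
  have lin: "linear Lg" using has_derivative_linear[OF Lg] .
  have phi: "((\<lambda>t. gg (X + t *\<^sub>R D)) has_derivative (\<lambda>t. t *\<^sub>R Lg D)) (at 0)"
  proof -
    have r: "((\<lambda>t::real. X + t *\<^sub>R D) has_derivative (\<lambda>t. t *\<^sub>R D)) (at 0)"
      by (auto intro!: derivative_eq_intros)
    have g0: "(gg has_derivative Lg) (at (X + (0::real) *\<^sub>R D))" using Lg by (simp add: gg_def)
    show ?thesis using has_derivative_compose[OF r g0]
      by (simp add: o_def linear_cmul[OF lin])
  qed
  define q where "q = (\<lambda>h::real. norm (gg (X + (0 + h) *\<^sub>R D) - gg (X + 0 *\<^sub>R D) - h *\<^sub>R Lg D) / norm h)"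
  have q: "(q \<longlongrightarrow> 0) (at 0)"
    using phi unfolding has_derivative_at q_def by blast
  have q': "(q \<longlongrightarrow> 0) (at_right 0)" by (rule tendsto_within_subset[OF q]) simp
  have lim: "((\<lambda>h. M2 f * norm D + q h) \<longlongrightarrow> M2 f * norm D + 0) (at_right 0)"
    by (intro tendsto_intros q')
  have ev: "eventually (\<lambda>h. norm (Lg D) \<le> M2 f * norm D + q h) (at_right 0)"
    unfolding eventually_at_right_field
  proof (intro exI[of _ \<delta>] conjI allI impI)
    show "(0::real) < \<delta>" by (rule \<delta>0)
    fix h :: real assume h: "0 < h" "h < \<delta>"
    have e: "q h = norm ((gg (X + h *\<^sub>R D) - gg X) /\<^sub>R h - Lg D)"
    proof -
      have "(gg (X + h *\<^sub>R D) - gg X) /\<^sub>R h - Lg D = inverse h *\<^sub>R (gg (X + h *\<^sub>R D) - gg X - h *\<^sub>R Lg D)"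
        using h by (simp add: scaleR_diff_right)
      then show ?thesis using h by (simp add: q_def divide_inverse ac_simps)
    qed
    have "norm (Lg D) \<le> norm ((gg (X + h *\<^sub>R D) - gg X) /\<^sub>R h) + norm ((gg (X + h *\<^sub>R D) - gg X) /\<^sub>R h - Lg D)"
      using norm_triangle_sub[of "Lg D" "(gg (X + h *\<^sub>R D) - gg X) /\<^sub>R h"]
      by (simp add: norm_minus_commute)
    then show "norm (Lg D) \<le> M2 f * norm D + q h" using key[OF h] e by linarith
  qed
  show ?thesis using tendsto_lowerbound[OF lim ev] by simp
qed


lemma mm_2: "(A::real^'n^'m) ** (2 * B) = 2 *\<^sub>R (A ** B)"
proof -
  have "2 * B = B + B" by (rule mult_2)
  then have "A ** (2 * B) = A ** B + A ** B" by (simp only: matrix_add_ldistrib)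
  then show ?thesis by (simp only: scaleR_2)
qed

lemma mm_2': "(A::real^'n^'m) ** (B * 2) = 2 *\<^sub>R (A ** B)"
  using mm_2[of A B] by (simp only: mult.commute[of B 2])

lemma tr_zero: "transpose (0::real^'n^'m) = 0"
  by (simp add: transpose_def vec_eq_iff)

lemma half3: "(3/2::real) *\<^sub>R (V::'a::real_vector) = V + (1/2) *\<^sub>R V"
  using scaleR_add_left[of 1 "1/2" V] by simp

theorem mainTheorem11:
  fixes f :: "real^'p^'n \<Rightarrow> real" and \<beta> :: real and X D1 D2 :: "real^'p^'n"
  assumes f_diff: "\<forall>Y. f differentiable (at Y)"
    and f_lip: "locally_lipschitz f"
    and gradf_lip: "locally_lipschitz (grad f)"
    and f_twice: "\<forall>Y. grad f differentiable (at Y)"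
    and beta_pos: "\<beta> > 0"
    and X_st: "X \<in> Stiefel"
    and crit: "grad (hfun f \<beta>) X = 0"
    and D1: "D1 \<in> tangentSp X"
    and D2: "D2 \<in> normalSp X"
  shows "D2 \<bullet> hess (hfun f \<beta>) X D2 \<ge> (2 * \<beta> - M2 f) * (norm D2)^2
         \<and> D1 \<bullet> hess (hfun f \<beta>) X D2 = 0"
proof -
  have XX: "transpose X ** X = mat 1" using X_st by (simp add: Stiefel_def)
  have XXM: "transpose X ** (X ** M) = M" for M :: "real^'q^'p"
    by (simp add: matrix_mul_assoc XX)
  have AX: "Acal X = mat 1" 
    by (simp add: Acal_def XX vec_eq_iff mat_def)
  have QX: "X ** Acal X = X" by (simp add: AX)
  obtain H where H: "(grad f has_derivative H) (at X)"
    using f_twice by (auto simp: differentiable_def)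
  have lH: "linear H" using H has_derivative_linear by blast
  define W where "W = (\<lambda>Y. grad f (Y ** Acal Y))"
  have W: "(W has_derivative (\<lambda>D. H (DQ X D))) (at X)"
    unfolding W_def using has_derivative_compose[OF Q_deriv, of "grad f" H X] H QX by (simp add: o_def)
  define W' where "W' = (\<lambda>D. H (DQ X D))"
  define Lg where "Lg = (\<lambda>D. W' D ** Acal X
      - W X ** ((1/2) *\<^sub>R (transpose D ** X + transpose X ** D))
      - (1/2) *\<^sub>R (D ** (transpose (W X) ** X) + X ** (transpose (W' D) ** X + transpose (W X) ** D)
         + D ** (transpose X ** W X) + X ** (transpose D ** W X + transpose X ** W' D)))"
  define Lp where "Lp = (\<lambda>D. \<beta> *\<^sub>R
     (D ** (transpose X ** X - mat 1) + X ** (transpose D ** X + transpose X ** D)))"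
  have gg: "grad (gfun f) = (\<lambda>Y. Pm Y (W Y))"
    using grad_g[OF f_diff] by (simp add: fun_eq_iff W_def)
  have gh: "grad (hfun f \<beta>) = (\<lambda>Y. Pm Y (W Y) + \<beta> *\<^sub>R (Y ** (transpose Y ** Y - mat 1)))"
    using grad_h[OF f_diff] by (simp add: fun_eq_iff W_def)
  have dLg: "(grad (gfun f) has_derivative Lg) (at X)"
    unfolding gg Lg_def W'_def by (rule Pm_deriv[OF W])
  have dh: "(grad (hfun f \<beta>) has_derivative (\<lambda>D. Lg D + Lp D)) (at X)"
    unfolding gh using Pm_deriv[OF W] pg_deriv[of \<beta> X] unfolding Lg_def Lp_def W'_def
    by (rule has_derivative_add)
  have hess: "hess (hfun f \<beta>) X D = Lg D + Lp D" for D
    unfolding hess_def using frechet_derivative_at[OF dh] by metis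
  obtain L where L: "transpose L = L" and D2L: "D2 = X ** L" using D2 by (auto simp: normalSp_def)
  define K where "K = transpose X ** D1"
  have K: "transpose K = - K"
  proof -
    have "(1/2::real) *\<^sub>R (transpose D1 ** X + transpose (transpose D1 ** X)) = 0"
      using D1 unfolding tangentSp_def symPart_def by simp
    then have "transpose D1 ** X + transpose (transpose D1 ** X) = 0" by simp
    moreover have "transpose (transpose D1 ** X) = K" by (simp add: K_def matrix_transpose_mul)
    moreover have "transpose K = transpose D1 ** X" by (simp add: K_def matrix_transpose_mul)
    ultimately have e: "transpose D1 ** X = - transpose (transpose D1 ** X)"
      and e2: "transpose (transpose D1 ** X) = K" and e3: "transpose K = transpose D1 ** X"
      by (simp_all only: eq_neg_iff_add_eq_0)
    have "transpose K = transpose D1 ** X" by (rule e3)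
    also have "\<dots> = - transpose (transpose D1 ** X)" by (rule e)
    also have "\<dots> = - K" by (simp only: e2)
    finally show ?thesis .
  qed
  define S where "S = (1/2) *\<^sub>R (transpose (W X) ** X + transpose X ** W X)"
  have S: "transpose S = S" by (simp add: S_def transpose_scalar tr_add matrix_transpose_mul add.commute)
  have crit': "Pm X (W X) = 0" using crit unfolding gh by (simp add: XX)
  have WX: "W X = X ** S"
    using crit' unfolding Pm_def S_def AX by (simp add: mm_rscale matrix_add_ldistrib algebra_simps)
  have DQ0: "DQ X D2 = 0"
    unfolding DQ_def AX D2L by (simp add: matrix_transpose_mul L XXM matrix_mul_assoc[symmetric] XX mm_2)
  have W'0: "W' D2 = 0" unfolding W'_def DQ0 using lH linear_0 by blast
  have LgD2: "Lg D2 = X ** (- (3/2) *\<^sub>R (S ** L + L ** S))"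
    unfolding Lg_def WX D2L AX W'0[unfolded D2L]
    by (simp add: matrix_transpose_mul L S XXM matrix_mul_assoc[symmetric] XX mm_rscale
        matrix_add_ldistrib mm_ldiff mm_lneg mm_2 mm_2' tr_zero algebra_simps half3)
  have LpD2: "Lp D2 = (2 * \<beta>) *\<^sub>R D2"
    unfolding Lp_def D2L
    by (simp add: matrix_transpose_mul L XXM matrix_mul_assoc[symmetric] XX mm_rscale
        matrix_add_ldistrib mm_2 mm_2' algebra_simps)
  have inX: "D1 \<bullet> (X ** M) = K \<bullet> M" for M :: "real^'p^'p"
    unfolding K_def using inner_mm1[of X M D1] by (simp add: inner_commute)
  have sk: "K \<bullet> (L ** S) = - (K \<bullet> (S ** L))"
    using inner_tr[of K "L ** S"] by (simp add: K matrix_transpose_mul L S)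
  have skL: "K \<bullet> L = 0"
    using inner_tr[of K L] by (simp add: K L)
  have part2: "D1 \<bullet> hess (hfun f \<beta>) X D2 = 0"
    unfolding hess LgD2 LpD2 inner_add_right
    by (simp add: inX inner_add_right sk D2L skL)
  have bnd: "norm (Lg D2) \<le> M2 f * norm D2"
    by (rule M2_bound[OF f_diff gradf_lip X_st dLg])
  have "- (M2 f * norm D2 ^2) \<le> D2 \<bullet> Lg D2"
  proof -
    have "\<bar>D2 \<bullet> Lg D2\<bar> \<le> norm D2 * norm (Lg D2)" by (rule Cauchy_Schwarz_ineq2)
    also have "\<dots> \<le> norm D2 * (M2 f * norm D2)" by (rule mult_left_mono[OF bnd]) simp
    also have "\<dots> = M2 f * norm D2 ^ 2" by (simp add: power2_eq_square)
    finally show ?thesis by linarith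
  qed
  moreover have "D2 \<bullet> Lp D2 = 2 * \<beta> * norm D2 ^ 2"
    by (simp add: LpD2 power2_norm_eq_inner)
  ultimately have part1: "D2 \<bullet> hess (hfun f \<beta>) X D2 \<ge> (2 * \<beta> - M2 f) * (norm D2)^2"
    unfolding hess inner_add_right by (simp add: left_diff_distrib)
  show ?thesis by (rule conjI[OF part1 part2])
qed

end
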